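(* Let $S$ be a weakly cancellative $\mathrm{Cu}$-semigroup satisfying (O5) and (O6). Then $S$ satisfies (O8).
   Context: A $\mathrm{Cu}$-semigroup is a positively ordered abelian monoid $S$ such that: (O1) every increasing sequence has a supremum; (O2) every $x$ is the supremum of a $\ll$-increasing sequence; (O3) $x'\ll x$, $y'\ll y$ imply $x'+y'\ll x+y$; (O4) $\sup_n(x_n+y_n)=\sup_nx_n+\sup_ny_n$ for increasing sequences. Here $x\ll y$ means: for every increasing sequence $(y_k)$ with $y\le\sup_ky_k$ there is $k$ with $x\le y_k$. (O5): given $x+y\le z$, $x'\ll x$, $y'\ll y$, there is $c$ with $x'+c\le z\le x+c$ and $y'\ll c$. (O6): given $x'\ll x\le y+z$, there are $e,f$ with $x'\le e+f$, $e\le x,y$, $f\le x,z$. $S$ is weakly cancellative if $x+z\ll y+z$ implies $x\ll y$. (O8): for all $x',x,y',y,z,w$ with $2w=w$, $x+y\ll z+w$, $x'\ll x$, $y'\ll y$, there exist $z_1,z_2$ with $z_1+z_2\ll z$, $x'\ll z_1+w$, $y'\ll z_2+w$, $z_1\ll x+w$, $z_2\ll y+w$. *)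

theory Defs
  imports Main
begin

definition is_sup_seq :: "(nat \<Rightarrow> 'a::order) \<Rightarrow> 'a \<Rightarrow> bool" where
  "is_sup_seq f s \<longleftrightarrow> (\<forall>n. f n \<le> s) \<and> (\<forall>u. (\<forall>n. f n \<le> u) \<longrightarrow> s \<le> u)"

definition way_below :: "'a::order \<Rightarrow> 'a \<Rightarrow> bool" (infix "\<lless>" 50) where
  "x \<lless> y \<longleftrightarrow> (\<forall>f s. mono f \<longrightarrow> is_sup_seq f s \<longrightarrow> y \<le> s \<longrightarrow> (\<exists>k. x \<le> f k))"

definition positively_ordered :: "'a::ordered_comm_monoid_add itself \<Rightarrow> bool" where
  "positively_ordered _ \<longleftrightarrow> (\<forall>x::'a. 0 \<le> x)"

definition O1 :: "'a::ordered_comm_monoid_add itself \<Rightarrow> bool" where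
  "O1 _ \<longleftrightarrow> (\<forall>f::nat \<Rightarrow> 'a. mono f \<longrightarrow> (\<exists>s. is_sup_seq f s))"

definition O2 :: "'a::ordered_comm_monoid_add itself \<Rightarrow> bool" where
  "O2 _ \<longleftrightarrow> (\<forall>x::'a. \<exists>f. (\<forall>n. f n \<lless> f (Suc n)) \<and> is_sup_seq f x)"

definition O3 :: "'a::ordered_comm_monoid_add itself \<Rightarrow> bool" where
  "O3 _ \<longleftrightarrow> (\<forall>x' x y' y :: 'a. x' \<lless> x \<longrightarrow> y' \<lless> y \<longrightarrow> x' + y' \<lless> x + y)"

definition O4 :: "'a::ordered_comm_monoid_add itself \<Rightarrow> bool" where
  "O4 _ \<longleftrightarrow> (\<forall>(f::nat \<Rightarrow> 'a) g a b. mono f \<longrightarrow> mono g \<longrightarrow> is_sup_seq f a \<longrightarrow> is_sup_seq g b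
      \<longrightarrow> is_sup_seq (\<lambda>n. f n + g n) (a + b))"

definition Cu_semigroup :: "'a::ordered_comm_monoid_add itself \<Rightarrow> bool" where
  "Cu_semigroup T \<longleftrightarrow> positively_ordered T \<and> O1 T \<and> O2 T \<and> O3 T \<and> O4 T"

definition O5 :: "'a::ordered_comm_monoid_add itself \<Rightarrow> bool" where
  "O5 _ \<longleftrightarrow> (\<forall>x y z x' y' :: 'a. x + y \<le> z \<longrightarrow> x' \<lless> x \<longrightarrow> y' \<lless> y \<longrightarrow>
      (\<exists>c. x' + c \<le> z \<and> z \<le> x + c \<and> y' \<lless> c))"

definition O6 :: "'a::ordered_comm_monoid_add itself \<Rightarrow> bool" where
  "O6 _ \<longleftrightarrow> (\<forall>x' x y z :: 'a. x' \<lless> x \<longrightarrow> x \<le> y + z \<longrightarrow>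
      (\<exists>e f. x' \<le> e + f \<and> e \<le> x \<and> e \<le> y \<and> f \<le> x \<and> f \<le> z))"

definition weakly_cancellative :: "'a::ordered_comm_monoid_add itself \<Rightarrow> bool" where
  "weakly_cancellative _ \<longleftrightarrow> (\<forall>x y z :: 'a. x + z \<lless> y + z \<longrightarrow> x \<lless> y)"

definition O8 :: "'a::ordered_comm_monoid_add itself \<Rightarrow> bool" where
  "O8 _ \<longleftrightarrow> (\<forall>x' x y' y z w :: 'a. w + w = w \<longrightarrow> x + y \<lless> z + w \<longrightarrow> x' \<lless> x \<longrightarrow> y' \<lless> y \<longrightarrow>
      (\<exists>z1 z2. z1 + z2 \<lless> z \<and> x' \<lless> z1 + w \<and> y' \<lless> z2 + w \<and> z1 \<lless> x + w \<and> z2 \<lless> y + w))"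

end

theory Submission
  imports Defs
begin

lemma wb_le: "(a::'a::order) \<lless> b \<Longrightarrow> a \<le> b"
proof -
  assume h: "a \<lless> b"
  have "mono (\<lambda>_::nat. b)" by (simp add: mono_def)
  moreover have "is_sup_seq (\<lambda>_::nat. b) b" by (simp add: is_sup_seq_def)
  ultimately show ?thesis using h unfolding way_below_def by blast
qed

lemma le_wb: "(a::'a::order) \<le> b \<Longrightarrow> b \<lless> c \<Longrightarrow> a \<lless> c"
  unfolding way_below_def by (meson order_trans)

lemma wb_le2: "(a::'a::order) \<lless> b \<Longrightarrow> b \<le> c \<Longrightarrow> a \<lless> c"
  unfolding way_below_def by (meson order_trans)

lemma O2_seq:
  assumes "O2 TYPE('a::ordered_comm_monoid_add)"
  shows "\<exists>f. (\<forall>n. f n \<lless> (b::'a)) \<and> mono f \<and> is_sup_seq f b \<and> (\<forall>n. f n \<lless> f (Suc n))"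
proof -
  obtain f where f: "\<forall>n. f n \<lless> f (Suc n)" "is_sup_seq f b"
    using assms unfolding O2_def by blast
  have m: "mono f" using f(1) by (intro mono_iff_le_Suc[THEN iffD2]) (auto intro: wb_le)
  have "\<forall>n. f n \<lless> b"
  proof
    fix n
    have "f (Suc n) \<le> b" using f(2) unfolding is_sup_seq_def by blast
    thus "f n \<lless> b" using f(1) wb_le2 by blast
  qed
  thus ?thesis using f m by blast
qed

lemma interp:
  assumes "O2 TYPE('a::ordered_comm_monoid_add)" and "(a::'a) \<lless> b"
  shows "\<exists>c. a \<lless> c \<and> c \<lless> b"
proof -
  obtain f where f: "\<forall>n. f n \<lless> b" "mono f" "is_sup_seq f b" "\<forall>n. f n \<lless> f (Suc n)"
    using O2_seq[OF assms(1)] by blast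
  obtain k where "a \<le> f k" using assms(2) f unfolding way_below_def by blast
  hence "a \<lless> f (Suc k)" using f(4) le_wb by blast
  thus ?thesis using f(1) by blast
qed

lemma split_w:
  assumes "O2 TYPE('a::ordered_comm_monoid_add)" "O4 TYPE('a)" and "(a::'a) \<lless> b + w"
  shows "\<exists>b'. b' \<lless> b \<and> a \<lless> b' + w"
proof -
  obtain a1 where a1: "a \<lless> a1" "a1 \<lless> b + w" using interp[OF assms(1,3)] by blast
  obtain f where f: "\<forall>n. f n \<lless> b" "mono f" "is_sup_seq f b"
    using O2_seq[OF assms(1)] by blast
  have mc: "mono (\<lambda>_::nat. w)" by (simp add: mono_def)
  have sc: "is_sup_seq (\<lambda>_::nat. w) w" by (simp add: is_sup_seq_def)
  have s: "is_sup_seq (\<lambda>n. f n + w) (b + w)"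
    using assms(2) f mc sc unfolding O4_def by blast
  have m: "mono (\<lambda>n. f n + w)" using f(2) by (simp add: mono_def add_right_mono)
  obtain k where "a1 \<le> f k + w" using a1(2) s m unfolding way_below_def by blast
  hence "a \<lless> f k + w" using a1(1) wb_le2 by blast
  thus ?thesis using f(1) by blast
qed

theorem mainTheorem15:
  assumes "Cu_semigroup TYPE('a::ordered_comm_monoid_add)"
    and "weakly_cancellative TYPE('a)"
    and "O5 TYPE('a)"
    and "O6 TYPE('a)"
  shows "O8 TYPE('a)"
  unfolding O8_def
proof (intro allI impI)
  fix x' x y' y z w :: 'a
  assume hw: "w + w = w" and h: "x + y \<lless> z + w" and hx: "x' \<lless> x" and hy: "y' \<lless> y"
  have pos: "\<And>u::'a. 0 \<le> u" using assms(1) unfolding Cu_semigroup_def positively_ordered_def by blast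
  have o2: "O2 TYPE('a)" and o4: "O4 TYPE('a)" using assms(1) unfolding Cu_semigroup_def by auto
  obtain z0 where z0: "z0 \<lless> z" "x + y \<lless> z0 + w" using split_w[OF o2 o4 h] by blast
  obtain x2 where x2: "x' \<lless> x2" "x2 \<lless> x" using interp[OF o2 hx] by blast
  have xy: "x \<le> x + y" using add_left_mono[OF pos[of y], of x] by simp
  have "x \<le> z0 + w" using xy wb_le[OF z0(2)] by (rule order_trans)
  then obtain e f where ef: "x2 \<le> e + f" "e \<le> x" "e \<le> z0" "f \<le> x" "f \<le> w"
    using assms(4) x2(2) unfolding O6_def by blast
  have "e + f \<le> e + w" using ef(5) by (rule add_left_mono)
  hence "x2 \<le> e + w" using ef(1) by simp
  hence "x' \<lless> e + w" using x2(1) wb_le2 by blast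
  then obtain e' where e': "e' \<lless> e" "x' \<lless> e' + w" using split_w[OF o2 o4] by blast
  have zz: "(0::'a) \<lless> 0" unfolding way_below_def using pos by blast
  obtain c where c: "e' + c \<le> z0" "z0 \<le> e + c"
    using assms(3) e'(1) zz ef(3) unfolding O5_def by (metis add_0_right)
  have "y + e \<le> x + y" using add_left_mono[OF ef(2), of y] by (simp add: add.commute)
  moreover have "z0 + w \<le> (c + w) + e" using add_right_mono[OF c(2), of w] by (simp add: ac_simps)
  ultimately have "y + e \<lless> (c + w) + e" using z0(2) le_wb wb_le2 by blast
  hence ycw: "y \<lless> c + w" using assms(2) unfolding weakly_cancellative_def by blast
  obtain y2 where y2: "y' \<lless> y2" "y2 \<lless> y" using interp[OF o2 hy] by blast
  obtain y3 where y3: "y2 \<lless> y3" "y3 \<lless> y" using interp[OF o2 y2(2)] by blast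
  have "y3 \<le> c + w" using wb_le[OF y3(2)] wb_le[OF ycw] by (rule order_trans)
  then obtain g k where gk: "y2 \<le> g + k" "g \<le> y3" "g \<le> c" "k \<le> w"
    using assms(4) y3(1) unfolding O6_def by blast
  have "e' + g \<le> e' + c" using gk(3) by (rule add_left_mono)
  hence "e' + g \<le> z0" using c(1) by simp
  hence r1: "e' + g \<lless> z" using z0(1) le_wb by blast
  have "g + k \<le> g + w" using gk(4) by (rule add_left_mono)
  hence r2: "y' \<lless> g + w" using y2(1) gk(1) wb_le2 by (meson order_trans)
  have xw: "x \<le> x + w" using add_left_mono[OF pos[of w], of x] by simp
  have yw: "y \<le> y + w" using add_left_mono[OF pos[of w], of y] by simp
  have r3: "e' \<lless> x + w" using e'(1) ef(2) xw wb_le2 by (meson order_trans)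
  have r4: "g \<lless> y + w" using gk(2) y3(2) yw le_wb wb_le2 by blast
  show "\<exists>z1 z2. z1 + z2 \<lless> z \<and> x' \<lless> z1 + w \<and> y' \<lless> z2 + w \<and> z1 \<lless> x + w \<and> z2 \<lless> y + w"
    using r1 e'(2) r2 r3 r4 by blast
qed

end
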